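(* Let $f:X\to Y$ be a definable function in a saturated model $\mathcal U$. Then $f$ is always almost saturated if and only if for all global types $p,q\in S_X(\mathcal U)$, if $f_*(p)=f_*(q)$ and this type is not realized, then $p=q$.
   Context: For a definable $Z\subseteq X$, $Z$ is almost saturated with respect to $f$ if $f(Z)\cap f(X\setminus Z)$ is finite; $f$ is always almost saturated if every definable subset of $X$ is almost saturated with respect to $f$. $S_X(\mathcal U)$ is the space of complete types over $\mathcal U$ concentrating on $X$, and $f_*(p)$ is the pushforward type $\{D: f^{-1}(D)\in p\}$. *)

theory Defs
  imports Main "HOL-Library.Equipollence"
begin

text \<open>A first-order structure with universe the type 'a, presented (following
van den Dries) by its families Def n of definable (with parameters) subsets of U^n;
n-tuples are lists of length n.\<close>

definition tup :: "nat \<Rightarrow> 'a list set" where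
  "tup n = {xs. length xs = n}"

definition is_structure :: "(nat \<Rightarrow> 'a list set set) \<Rightarrow> bool" where
  "is_structure Def \<longleftrightarrow>
     (\<forall>n. Def n \<subseteq> Pow (tup n)) \<and>
     (\<forall>n. {} \<in> Def n) \<and>
     (\<forall>n A. A \<in> Def n \<longrightarrow> tup n - A \<in> Def n) \<and>
     (\<forall>n A B. A \<in> Def n \<longrightarrow> B \<in> Def n \<longrightarrow> A \<union> B \<in> Def n) \<and>
     (\<forall>n A. A \<in> Def n \<longrightarrow> {xs @ [y] | xs y. xs \<in> A} \<in> Def (Suc n)) \<and>
     (\<forall>n A. A \<in> Def n \<longrightarrow> {y # xs | xs y. xs \<in> A} \<in> Def (Suc n)) \<and>
     (\<forall>n. {xs \<in> tup (Suc n). hd xs = last xs} \<in> Def (Suc n)) \<and>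
     (\<forall>n A. A \<in> Def (Suc n) \<longrightarrow> butlast ` A \<in> Def n) \<and>
     (\<forall>a. {[a]} \<in> Def 1)"

definition saturated :: "(nat \<Rightarrow> 'a list set set) \<Rightarrow> bool" where
  "saturated Def \<longleftrightarrow>
     (\<forall>n F. F \<subseteq> Def n \<longrightarrow> F \<prec> (UNIV :: 'a set) \<longrightarrow>
        (\<forall>G. G \<subseteq> F \<longrightarrow> finite G \<longrightarrow> tup n \<inter> \<Inter>G \<noteq> {}) \<longrightarrow>
        tup n \<inter> \<Inter>F \<noteq> {})"

definition definable_fun ::
  "(nat \<Rightarrow> 'a list set set) \<Rightarrow> nat \<Rightarrow> nat \<Rightarrow> 'a list set \<Rightarrow> 'a list set
     \<Rightarrow> ('a list \<Rightarrow> 'a list) \<Rightarrow> bool" where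
  "definable_fun Def n m X Y f \<longleftrightarrow>
     X \<in> Def n \<and> Y \<in> Def m \<and> f ` X \<subseteq> Y \<and> {xs @ f xs | xs. xs \<in> X} \<in> Def (n + m)"

definition almost_saturated ::
  "'a list set \<Rightarrow> ('a list \<Rightarrow> 'a list) \<Rightarrow> 'a list set \<Rightarrow> bool" where
  "almost_saturated X f Z \<longleftrightarrow> finite (f ` Z \<inter> f ` (X - Z))"

definition always_almost_saturated ::
  "(nat \<Rightarrow> 'a list set set) \<Rightarrow> nat \<Rightarrow> 'a list set \<Rightarrow> ('a list \<Rightarrow> 'a list) \<Rightarrow> bool" where
  "always_almost_saturated Def n X f \<longleftrightarrow>
     (\<forall>Z. Z \<in> Def n \<longrightarrow> Z \<subseteq> X \<longrightarrow> almost_saturated X f Z)"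

text \<open>Complete types over U in n variables: ultrafilters of the Boolean algebra Def n.
A type concentrates on X if X belongs to it.\<close>
definition is_type :: "(nat \<Rightarrow> 'a list set set) \<Rightarrow> nat \<Rightarrow> 'a list set set \<Rightarrow> bool" where
  "is_type Def n p \<longleftrightarrow>
     p \<subseteq> Def n \<and> tup n \<in> p \<and> {} \<notin> p \<and>
     (\<forall>A B. A \<in> p \<longrightarrow> B \<in> p \<longrightarrow> A \<inter> B \<in> p) \<and>
     (\<forall>A B. A \<in> p \<longrightarrow> B \<in> Def n \<longrightarrow> A \<subseteq> B \<longrightarrow> B \<in> p) \<and>
     (\<forall>A. A \<in> Def n \<longrightarrow> A \<in> p \<or> tup n - A \<in> p)"

definition types_on :: "(nat \<Rightarrow> 'a list set set) \<Rightarrow> nat \<Rightarrow> 'a list set \<Rightarrow> 'a list set set set" where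
  "types_on Def n X = {p. is_type Def n p \<and> X \<in> p}"

definition pushforward ::
  "(nat \<Rightarrow> 'a list set set) \<Rightarrow> nat \<Rightarrow> 'a list set \<Rightarrow> ('a list \<Rightarrow> 'a list)
     \<Rightarrow> 'a list set set \<Rightarrow> 'a list set set" where
  "pushforward Def m X f p = {D \<in> Def m. {xs \<in> X. f xs \<in> D} \<in> p}"

definition realized :: "'a list set set \<Rightarrow> bool" where
  "realized r \<longleftrightarrow> (\<exists>b. \<forall>D \<in> r. b \<in> D)"

end

theory Submission
  imports Defs
begin

lemma ty_sub: "is_type D k p \<Longrightarrow> p \<subseteq> D k" by (simp add: is_type_def)
lemma ty_tup: "is_type D k p \<Longrightarrow> tup k \<in> p" by (simp add: is_type_def)
lemma ty_emp: "is_type D k p \<Longrightarrow> {} \<notin> p" by (simp add: is_type_def)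
lemma ty_int: "is_type D k p \<Longrightarrow> A \<in> p \<Longrightarrow> B \<in> p \<Longrightarrow> A \<inter> B \<in> p" by (simp add: is_type_def)
lemma ty_up: "is_type D k p \<Longrightarrow> A \<in> p \<Longrightarrow> B \<in> D k \<Longrightarrow> A \<subseteq> B \<Longrightarrow> B \<in> p" unfolding is_type_def by metis
lemma ty_cmp: "is_type D k p \<Longrightarrow> A \<in> D k \<Longrightarrow> A \<notin> p \<Longrightarrow> tup k - A \<in> p" unfolding is_type_def by metis

locale struc = fixes Def :: "nat \<Rightarrow> 'a list set set" assumes S: "is_structure Def"
begin

lemma S0: "(\<forall>n. Def n \<subseteq> Pow (tup n)) \<and>
     (\<forall>n. {} \<in> Def n) \<and>
     (\<forall>n A. A \<in> Def n \<longrightarrow> tup n - A \<in> Def n) \<and>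
     (\<forall>n A B. A \<in> Def n \<longrightarrow> B \<in> Def n \<longrightarrow> A \<union> B \<in> Def n) \<and>
     (\<forall>n A. A \<in> Def n \<longrightarrow> {xs @ [y] | xs y. xs \<in> A} \<in> Def (Suc n)) \<and>
     (\<forall>n A. A \<in> Def n \<longrightarrow> {y # xs | xs y. xs \<in> A} \<in> Def (Suc n)) \<and>
     (\<forall>n. {xs \<in> tup (Suc n). hd xs = last xs} \<in> Def (Suc n)) \<and>
     (\<forall>n A. A \<in> Def (Suc n) \<longrightarrow> butlast ` A \<in> Def n) \<and>
     (\<forall>a. {[a]} \<in> Def 1)" using S unfolding is_structure_def .
lemma sub: "A \<in> Def k \<Longrightarrow> A \<subseteq> tup k" using conjunct1[OF S0] by blast
lemma emp: "{} \<in> Def k" using conjunct1[OF conjunct2[OF S0]] by blast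
lemma compl: "A \<in> Def k \<Longrightarrow> tup k - A \<in> Def k" using conjunct1[OF conjunct2[OF conjunct2[OF S0]]] by blast
lemma un: "A \<in> Def k \<Longrightarrow> B \<in> Def k \<Longrightarrow> A \<union> B \<in> Def k" using conjunct1[OF conjunct2[OF conjunct2[OF conjunct2[OF S0]]]] by blast
lemma sfx: "A \<in> Def k \<Longrightarrow> {xs @ [y] | xs y. xs \<in> A} \<in> Def (Suc k)" using conjunct1[OF conjunct2[OF conjunct2[OF conjunct2[OF conjunct2[OF S0]]]]] by blast
lemma pfx: "A \<in> Def k \<Longrightarrow> {y # xs | xs y. xs \<in> A} \<in> Def (Suc k)" using conjunct1[OF conjunct2[OF conjunct2[OF conjunct2[OF conjunct2[OF conjunct2[OF S0]]]]]] by blast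
lemma diag: "{xs \<in> tup (Suc k). hd xs = last xs} \<in> Def (Suc k)" using conjunct1[OF conjunct2[OF conjunct2[OF conjunct2[OF conjunct2[OF conjunct2[OF conjunct2[OF S0]]]]]]] by blast
lemma bl: "A \<in> Def (Suc k) \<Longrightarrow> butlast ` A \<in> Def k" using conjunct1[OF conjunct2[OF conjunct2[OF conjunct2[OF conjunct2[OF conjunct2[OF conjunct2[OF conjunct2[OF S0]]]]]]]] by blast
lemma sing1: "{[a]} \<in> Def 1" using conjunct2[OF conjunct2[OF conjunct2[OF conjunct2[OF conjunct2[OF conjunct2[OF conjunct2[OF conjunct2[OF S0]]]]]]]] by blast

lemma tupD: "tup k \<in> Def k" using compl[OF emp] by simp

lemma int: "A \<in> Def k \<Longrightarrow> B \<in> Def k \<Longrightarrow> A \<inter> B \<in> Def k"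
proof -
  assume a: "A \<in> Def k" "B \<in> Def k"
  have "A \<inter> B = tup k - ((tup k - A) \<union> (tup k - B))" using sub[OF a(1)] sub[OF a(2)] by blast
  thus ?thesis using a by (simp add: compl un)
qed

lemma sfxn: "A \<in> Def k \<Longrightarrow> {xs @ ys | xs ys. xs \<in> A \<and> ys \<in> tup j} \<in> Def (k + j)"
proof (induction j)
  case 0
  have "{xs @ ys | xs ys. xs \<in> A \<and> ys \<in> tup 0} = A" by (auto simp: tup_def)
  then show ?case using 0 by simp
next
  case (Suc j)
  have "{xs @ ys | xs ys. xs \<in> A \<and> ys \<in> tup (Suc j)} = {xs @ [y] | xs y. xs \<in> {xs @ ys | xs ys. xs \<in> A \<and> ys \<in> tup j}}"
  proof
    show "{xs @ [y] | xs y. xs \<in> {xs @ ys | xs ys. xs \<in> A \<and> ys \<in> tup j}} \<subseteq> {xs @ ys | xs ys. xs \<in> A \<and> ys \<in> tup (Suc j)}"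
    proof
      fix z assume "z \<in> {xs @ [y] | xs y. xs \<in> {xs @ ys | xs ys. xs \<in> A \<and> ys \<in> tup j}}"
      then obtain xs ys y where "z = xs @ ys @ [y]" "xs \<in> A" "ys \<in> tup j" by auto
      moreover have "ys @ [y] \<in> tup (Suc j)" using \<open>ys \<in> tup j\<close> by (simp add: tup_def)
      ultimately show "z \<in> {xs @ ys | xs ys. xs \<in> A \<and> ys \<in> tup (Suc j)}" by blast
    qed
    show "{xs @ ys | xs ys. xs \<in> A \<and> ys \<in> tup (Suc j)} \<subseteq> {xs @ [y] | xs y. xs \<in> {xs @ ys | xs ys. xs \<in> A \<and> ys \<in> tup j}}"
    proof
      fix z assume "z \<in> {xs @ ys | xs ys. xs \<in> A \<and> ys \<in> tup (Suc j)}"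
      then obtain xs ys where z: "z = xs @ ys" "xs \<in> A" "length ys = Suc j" by (auto simp: tup_def)
      then obtain ys' y where ys: "ys = ys' @ [y]" by (cases ys rule: rev_cases) auto
      hence "ys' \<in> tup j" using z(3) by (simp add: tup_def)
      hence "xs @ ys' \<in> {xs @ ys | xs ys. xs \<in> A \<and> ys \<in> tup j}" using z(2) by blast
      moreover have "z = (xs @ ys') @ [y]" using z(1) ys by simp
      ultimately show "z \<in> {xs @ [y] | xs y. xs \<in> {xs @ ys | xs ys. xs \<in> A \<and> ys \<in> tup j}}" by blast
    qed
  qed
  then show ?case using sfx[OF Suc.IH[OF Suc.prems]] by simp
qed

lemma pfxn: "A \<in> Def k \<Longrightarrow> {ys @ xs | xs ys. xs \<in> A \<and> ys \<in> tup j} \<in> Def (j + k)"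
proof (induction j)
  case 0
  have "{ys @ xs | xs ys. xs \<in> A \<and> ys \<in> tup 0} = A" by (auto simp: tup_def)
  then show ?case using 0 by simp
next
  case (Suc j)
  have "{ys @ xs | xs ys. xs \<in> A \<and> ys \<in> tup (Suc j)} = {y # xs | xs y. xs \<in> {ys @ xs | xs ys. xs \<in> A \<and> ys \<in> tup j}}"
  proof
    show "{y # xs | xs y. xs \<in> {ys @ xs | xs ys. xs \<in> A \<and> ys \<in> tup j}} \<subseteq> {ys @ xs | xs ys. xs \<in> A \<and> ys \<in> tup (Suc j)}"
    proof
      fix z assume "z \<in> {y # xs | xs y. xs \<in> {ys @ xs | xs ys. xs \<in> A \<and> ys \<in> tup j}}"
      then obtain xs ys y where "z = (y # ys) @ xs" "xs \<in> A" "ys \<in> tup j" by auto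
      moreover have "y # ys \<in> tup (Suc j)" using \<open>ys \<in> tup j\<close> by (simp add: tup_def)
      ultimately show "z \<in> {ys @ xs | xs ys. xs \<in> A \<and> ys \<in> tup (Suc j)}" by blast
    qed
    show "{ys @ xs | xs ys. xs \<in> A \<and> ys \<in> tup (Suc j)} \<subseteq> {y # xs | xs y. xs \<in> {ys @ xs | xs ys. xs \<in> A \<and> ys \<in> tup j}}"
    proof
      fix z assume "z \<in> {ys @ xs | xs ys. xs \<in> A \<and> ys \<in> tup (Suc j)}"
      then obtain xs ys where z: "z = ys @ xs" "xs \<in> A" "length ys = Suc j" by (auto simp: tup_def)
      then obtain ys' y where ys: "ys = y # ys'" by (cases ys) auto
      hence "ys' \<in> tup j" using z(3) by (simp add: tup_def)
      hence "ys' @ xs \<in> {ys @ xs | xs ys. xs \<in> A \<and> ys \<in> tup j}" using z(2) by blast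
      moreover have "z = y # (ys' @ xs)" using z(1) ys by simp
      ultimately show "z \<in> {y # xs | xs y. xs \<in> {ys @ xs | xs ys. xs \<in> A \<and> ys \<in> tup j}}" by blast
    qed
  qed
  then show ?case using pfx[OF Suc.IH[OF Suc.prems]] by simp
qed

lemma prod: "A \<in> Def k \<Longrightarrow> B \<in> Def j \<Longrightarrow> {xs @ ys | xs ys. xs \<in> A \<and> ys \<in> B} \<in> Def (k + j)"
proof -
  assume a: "A \<in> Def k" "B \<in> Def j"
  have "{xs @ ys | xs ys. xs \<in> A \<and> ys \<in> B} = {xs @ ys | xs ys. xs \<in> A \<and> ys \<in> tup j} \<inter> {ys @ xs | xs ys. xs \<in> B \<and> ys \<in> tup k}"
  proof
    show "{xs @ ys | xs ys. xs \<in> A \<and> ys \<in> B} \<subseteq> {xs @ ys | xs ys. xs \<in> A \<and> ys \<in> tup j} \<inter> {ys @ xs | xs ys. xs \<in> B \<and> ys \<in> tup k}"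
      using sub[OF a(1)] sub[OF a(2)] by blast
    show "{xs @ ys | xs ys. xs \<in> A \<and> ys \<in> tup j} \<inter> {ys @ xs | xs ys. xs \<in> B \<and> ys \<in> tup k} \<subseteq> {xs @ ys | xs ys. xs \<in> A \<and> ys \<in> B}"
    proof
      fix z assume "z \<in> {xs @ ys | xs ys. xs \<in> A \<and> ys \<in> tup j} \<inter> {ys @ xs | xs ys. xs \<in> B \<and> ys \<in> tup k}"
      then obtain xs ys xs' ys' where z: "z = xs @ ys" "xs \<in> A" "z = ys' @ xs'" "xs' \<in> B" "ys' \<in> tup k" by blast
      have "length xs = length ys'" using z(2,5) sub[OF a(1)] by (auto simp: tup_def)
      hence "xs = ys' \<and> ys = xs'" using z(1,3) by (simp add: append_eq_append_conv)
      thus "z \<in> {xs @ ys | xs ys. xs \<in> A \<and> ys \<in> B}" using z by blast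
    qed
  qed
  thus ?thesis using int[OF sfxn[OF a(1)] pfxn[OF a(2)]] by (simp add: add.commute)
qed

lemma taken: "A \<in> Def (k + j) \<Longrightarrow> take k ` A \<in> Def k"
proof (induction j arbitrary: A)
  case 0
  have "take k ` A = A" using sub[OF 0] by (force simp: tup_def)
  then show ?case using 0 by simp
next
  case (Suc j)
  have "butlast ` A \<in> Def (k + j)" using bl Suc.prems by simp
  from Suc.IH[OF this] have "take k ` butlast ` A \<in> Def k" .
  moreover have "take k ` butlast ` A = take k ` A"
    using sub[OF Suc.prems] by (force simp: tup_def image_image take_butlast)
  ultimately show ?case by simp
qed

definition R :: "'a list \<Rightarrow> 'a list" where "R xs = last xs # butlast xs"

lemma rotR: "A \<in> Def (Suc k) \<Longrightarrow> R ` A \<in> Def (Suc k)"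
proof -
  assume a: "A \<in> Def (Suc k)"
  let ?B = "{ys @ xs | xs ys. xs \<in> A \<and> ys \<in> tup 1} \<inter> {xs \<in> tup (Suc (Suc k)). hd xs = last xs}"
  have "?B \<in> Def (Suc (Suc k))" using int[OF pfxn[OF a, of 1, simplified] diag] by simp
  hence "butlast ` ?B \<in> Def (Suc k)" by (rule bl)
  moreover have "butlast ` ?B = R ` A"
  proof
    show "butlast ` ?B \<subseteq> R ` A"
    proof
      fix z assume "z \<in> butlast ` ?B"
      then obtain w where w: "w \<in> ?B" "z = butlast w" by blast
      then obtain xs ys where wx: "w = ys @ xs" "xs \<in> A" "ys \<in> tup 1" "hd w = last w" by blast
      then obtain y where y: "ys = [y]" by (auto simp: tup_def length_Suc_conv)
      have ne: "xs \<noteq> []" using sub[OF a] wx(2) by (auto simp: tup_def)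
      have "y = last xs" using wx(1,4) y ne by simp
      hence "z = R xs" using w(2) wx(1) y ne by (simp add: R_def)
      thus "z \<in> R ` A" using wx(2) by blast
    qed
    show "R ` A \<subseteq> butlast ` ?B"
    proof
      fix z assume "z \<in> R ` A"
      then obtain xs where xs: "xs \<in> A" "z = R xs" by auto
      have l: "length xs = Suc k" using sub[OF a] xs(1) by (auto simp: tup_def)
      hence ne: "xs \<noteq> []" by auto
      have "[last xs] \<in> tup 1" by (simp add: tup_def)
      hence "[last xs] @ xs \<in> {ys @ xs | xs ys. xs \<in> A \<and> ys \<in> tup 1}" using xs(1) by blast
      moreover have "[last xs] @ xs \<in> {xs \<in> tup (Suc (Suc k)). hd xs = last xs}" using l ne by (simp add: tup_def)
      ultimately have "[last xs] @ xs \<in> ?B" by blast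
      moreover have "z = butlast ([last xs] @ xs)" using ne xs(2) by (simp add: R_def butlast_append)
      ultimately show "z \<in> butlast ` ?B" by blast
    qed
  qed
  ultimately show ?thesis by simp
qed

lemma rotR_inv: "xs \<noteq> [] \<Longrightarrow> rotate1 (R xs) = xs"
  by (simp add: R_def)

lemma lenR: "xs \<noteq> [] \<Longrightarrow> length (R xs) = length xs" by (cases xs rule: rev_cases) (auto simp: R_def)

lemma rotpow: "xs \<noteq> [] \<Longrightarrow> rotate j ((R^^j) xs) = xs"
proof (induction j)
  case 0 then show ?case by simp
next
  case (Suc j)
  have ne: "(R^^j) xs \<noteq> []" using Suc.prems by (induction j) (auto simp: R_def)
  have "rotate (Suc j) ((R^^Suc j) xs) = rotate j (rotate1 (R ((R^^j) xs)))"
    by (simp add: rotate1_rotate_swap)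
  also have "\<dots> = xs" using rotR_inv[OF ne] Suc by simp
  finally show ?case .
qed

lemma lenRp: "xs \<noteq> [] \<Longrightarrow> length ((R^^j) xs) = length xs"
proof (induction j)
  case 0 then show ?case by simp
next
  case (Suc j)
  have "(R^^j) xs \<noteq> []" using Suc by (cases j) (auto simp: R_def)
  then show ?case using Suc lenR by simp
qed

lemma Rk: "length xs = Suc k \<Longrightarrow> (R^^k) xs = rotate1 xs"
proof -
  assume l: "length xs = Suc k"
  hence ne: "xs \<noteq> []" by auto
  have "rotate1 xs = rotate1 (rotate k ((R^^k) xs))" using rotpow[OF ne] by simp
  also have "\<dots> = rotate (Suc k) ((R^^k) xs)" by simp
  also have "\<dots> = (R^^k) xs"
  proof -
    have "length ((R^^k) xs) = Suc k" using l lenRp[OF ne] by simp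
    thus ?thesis by (subst rotate_conv_mod) simp
  qed
  finally show ?thesis by simp
qed

lemma rotRp: "A \<in> Def (Suc k) \<Longrightarrow> (R^^j) ` A \<in> Def (Suc k)"
proof (induction j)
  case 0 then show ?case by simp
next
  case (Suc j)
  have "(R^^Suc j) ` A = R ` ((R^^j) ` A)" by (simp add: image_comp)
  then show ?case using rotR[OF Suc.IH[OF Suc.prems]] by simp
qed

lemma rot1: "A \<in> Def (Suc k) \<Longrightarrow> rotate1 ` A \<in> Def (Suc k)"
proof -
  assume a: "A \<in> Def (Suc k)"
  have "rotate1 ` A = (R^^k) ` A" using sub[OF a] by (auto simp: tup_def Rk intro!: image_cong)
  thus ?thesis using rotRp[OF a] by simp
qed

lemma tlD: "A \<in> Def (Suc k) \<Longrightarrow> tl ` A \<in> Def k"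
proof -
  assume a: "A \<in> Def (Suc k)"
  have "tl ` A = butlast ` rotate1 ` A"
  proof -
    have "\<And>xs. xs \<in> A \<Longrightarrow> tl xs = butlast (rotate1 xs)"
    proof -
      fix xs assume "xs \<in> A"
      hence "xs \<noteq> []" using sub[OF a] by (auto simp: tup_def)
      thus "tl xs = butlast (rotate1 xs)" by (cases xs) auto
    qed
    thus ?thesis by (simp add: image_image cong: image_cong)
  qed
  thus ?thesis using bl[OF rot1[OF a]] by simp
qed

lemma dropn: "A \<in> Def (j + k) \<Longrightarrow> drop j ` A \<in> Def k"
proof (induction j arbitrary: A)
  case 0 then show ?case by simp
next
  case (Suc j)
  have "tl ` A \<in> Def (j + k)" using tlD Suc.prems by simp
  from Suc.IH[OF this] have "drop j ` tl ` A \<in> Def k" .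
  moreover have "drop j ` tl ` A = drop (Suc j) ` A" by (simp add: image_image drop_Suc drop_tl)
  ultimately show ?case by simp
qed

lemma singD: "c \<in> tup k \<Longrightarrow> {c} \<in> Def k"
proof (induction c arbitrary: k)
  case Nil
  hence "k = 0" "tup k = {[]}" by (auto simp: tup_def)
  have e: "{[]} = (tup 0 :: 'a list set)" by (auto simp: tup_def)
  show ?case using tupD[of 0] e \<open>k = 0\<close> by simp
next
  case (Cons a c)
  then obtain k' where k: "k = Suc k'" "c \<in> tup k'" by (auto simp: tup_def)
  have "{xs @ ys | xs ys. xs \<in> {[a]} \<and> ys \<in> {c}} \<in> Def (1 + k')" by (rule prod[OF sing1 Cons.IH[OF k(2)]])
  moreover have "{xs @ ys | xs ys. xs \<in> {[a]} \<and> ys \<in> {c}} = {a # c}" by auto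
  ultimately show ?case using k by simp
qed

definition fip :: "nat \<Rightarrow> 'a list set set \<Rightarrow> bool" where
  "fip k F \<longleftrightarrow> (\<forall>G. G \<subseteq> F \<longrightarrow> finite G \<longrightarrow> tup k \<inter> \<Inter>G \<noteq> {})"

lemma fip_insert: "fip k M \<Longrightarrow> fip k (insert A M) \<longleftrightarrow> (\<forall>G. G \<subseteq> M \<longrightarrow> finite G \<longrightarrow> tup k \<inter> A \<inter> \<Inter>G \<noteq> {})"
proof
  assume h0: "fip k (insert A M)"
  show "\<forall>G. G \<subseteq> M \<longrightarrow> finite G \<longrightarrow> tup k \<inter> A \<inter> \<Inter>G \<noteq> {}"
  proof (intro allI impI)
    fix G assume "G \<subseteq> M" "finite G"
    hence "insert A G \<subseteq> insert A M" "finite (insert A G)" by auto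
    hence "tup k \<inter> \<Inter>(insert A G) \<noteq> {}" using h0 unfolding fip_def by (elim allE[of _ "insert A G"]) (elim impE)
    thus "tup k \<inter> A \<inter> \<Inter>G \<noteq> {}" by (simp add: inf_assoc)
  qed
next
  assume M: "fip k M" and h: "\<forall>G. G \<subseteq> M \<longrightarrow> finite G \<longrightarrow> tup k \<inter> A \<inter> \<Inter>G \<noteq> {}"
  show "fip k (insert A M)" unfolding fip_def
  proof (intro allI impI)
    fix G assume G: "G \<subseteq> insert A M" "finite G"
    show "tup k \<inter> \<Inter>G \<noteq> {}"
    proof (cases "A \<in> G")
      case True
      have e: "\<Inter>G = A \<inter> \<Inter>(G - {A})" using True by (metis Inter_insert insert_Diff)
      have "G - {A} \<subseteq> M" "finite (G - {A})" using G by auto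
      hence "tup k \<inter> A \<inter> \<Inter>(G - {A}) \<noteq> {}" using h by (elim allE[of _ "G - {A}"]) (elim impE)
      thus ?thesis unfolding e by (simp add: inf_assoc)
    next
      case False
      hence "G \<subseteq> M" using G by blast
      thus ?thesis using M G(2) unfolding fip_def by (elim allE[of _ G]) (elim impE)
    qed
  qed
qed

lemma extend: assumes F: "F \<subseteq> Def k" "fip k F" shows "\<exists>p. is_type Def k p \<and> F \<subseteq> p"
proof -
  let ?A = "{G. F \<subseteq> G \<and> G \<subseteq> Def k \<and> fip k G}"
  have zc: "\<forall>C\<in>chains ?A. \<exists>U\<in>?A. \<forall>X\<in>C. X \<subseteq> U"
  proof
    fix C assume C: "C \<in> chains ?A"
    have CA: "C \<subseteq> ?A" using C unfolding chains_def by blast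
    show "\<exists>U\<in>?A. \<forall>X\<in>C. X \<subseteq> U"
    proof (cases "C = {}")
      case True
      have "F \<in> ?A" using F by blast
      thus ?thesis using True by blast
    next
      case False
      then obtain C0 where "C0 \<in> C" by blast
      hence "F \<subseteq> C0" using CA by blast
      hence a1: "F \<subseteq> \<Union>C" using \<open>C0 \<in> C\<close> by blast
      have a2: "\<Union>C \<subseteq> Def k" using CA by blast
      have a3: "fip k (\<Union>C)" unfolding fip_def
      proof (intro allI impI)
        fix G assume G: "G \<subseteq> \<Union>C" "finite G"
        have "subset.chain ?A C" using C unfolding chains_alt_def by blast
        then obtain Y where Y: "Y \<in> C" "G \<subseteq> Y"
          using finite_subset_Union_chain[OF G(2) G(1) False] by blast
        hence "fip k Y" using CA by blast
        thus "tup k \<inter> \<Inter>G \<noteq> {}" using Y(2) G(2) unfolding fip_def by (elim allE[of _ G]) (elim impE)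
      qed
      have "\<Union>C \<in> ?A" using a1 a2 a3 by blast
      moreover have "\<forall>X\<in>C. X \<subseteq> \<Union>C" by blast
      ultimately show ?thesis by blast
    qed
  qed
  obtain M where M: "M \<in> ?A" and mx: "\<forall>X\<in>?A. M \<subseteq> X \<longrightarrow> X = M" using Zorn_Lemma2[OF zc] by (rule bexE)
  have M': "F \<subseteq> M \<and> M \<subseteq> Def k \<and> fip k M" using M by (rule CollectD)
  have Mf: "fip k M" "M \<subseteq> Def k" "F \<subseteq> M" using M' by (blast, blast, blast)
  have ins: "A \<in> M" if "A \<in> Def k" "fip k (insert A M)" for A
  proof -
    have "F \<subseteq> insert A M" "insert A M \<subseteq> Def k" using Mf(2,3) that(1) by blast+
    hence "insert A M \<in> ?A" using that(2) by simp
    moreover have "M \<subseteq> insert A M" by blast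
    ultimately have "insert A M = M" using mx by (elim ballE[of _ _ "insert A M"]) auto
    thus ?thesis by blast
  qed
  have tupM: "tup k \<in> M"
  proof (rule ins[OF tupD])
    show "fip k (insert (tup k) M)" unfolding fip_insert[OF Mf(1)]
    proof (intro allI impI)
      fix G assume "G \<subseteq> M" "finite G"
      hence "tup k \<inter> \<Inter>G \<noteq> {}" using Mf(1) unfolding fip_def by (elim allE[of _ G]) (elim impE)
      thus "tup k \<inter> tup k \<inter> \<Inter>G \<noteq> {}" by simp
    qed
  qed
  have empM: "{} \<notin> M" 
  proof
    assume "{} \<in> M"
    hence "{{}} \<subseteq> M" by simp
    hence "tup k \<inter> \<Inter>{{}} \<noteq> {}" using Mf(1) unfolding fip_def by (elim allE[of _ "{{}}"]) simp
    thus False by simp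
  qed
  have intM: "A \<inter> B \<in> M" if "A \<in> M" "B \<in> M" for A B
  proof (rule ins)
    show "A \<inter> B \<in> Def k" using that Mf int by blast
    show "fip k (insert (A \<inter> B) M)" unfolding fip_insert[OF Mf(1)]
    proof (intro allI impI)
      fix G assume G: "G \<subseteq> M" "finite G"
      have "insert A (insert B G) \<subseteq> M" "finite (insert A (insert B G))" using G that by auto
      hence "tup k \<inter> \<Inter>(insert A (insert B G)) \<noteq> {}" using Mf(1) unfolding fip_def by blast
      thus "tup k \<inter> (A \<inter> B) \<inter> \<Inter>G \<noteq> {}" by auto
    qed
  qed
  have upM: "B \<in> M" if "A \<in> M" "B \<in> Def k" "A \<subseteq> B" for A B
  proof (rule ins[OF that(2)])
    show "fip k (insert B M)" unfolding fip_insert[OF Mf(1)]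
    proof (intro allI impI)
      fix G assume G: "G \<subseteq> M" "finite G"
      have "insert A G \<subseteq> M" "finite (insert A G)" using G that by auto
      hence "tup k \<inter> \<Inter>(insert A G) \<noteq> {}" using Mf(1) unfolding fip_def by blast
      thus "tup k \<inter> B \<inter> \<Inter>G \<noteq> {}" using that(3) by auto
    qed
  qed
  have cM: "A \<in> M \<or> tup k - A \<in> M" if "A \<in> Def k" for A
  proof (rule ccontr)
    assume "\<not> (A \<in> M \<or> tup k - A \<in> M)"
    hence a1: "A \<notin> M" and a2: "tup k - A \<notin> M" by auto
    have n1: "\<not> fip k (insert A M)" using ins[OF that] a1 by blast
    have n2: "\<not> fip k (insert (tup k - A) M)" using ins[OF compl[OF that]] a2 by blast
    obtain G1 where G1: "G1 \<subseteq> M" "finite G1" "tup k \<inter> A \<inter> \<Inter>G1 = {}" using n1 unfolding fip_insert[OF Mf(1)] by blast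
    obtain G2 where G2: "G2 \<subseteq> M" "finite G2" "tup k \<inter> (tup k - A) \<inter> \<Inter>G2 = {}" using n2 unfolding fip_insert[OF Mf(1)] by blast
    have "G1 \<union> G2 \<subseteq> M" "finite (G1 \<union> G2)" using G1 G2 by auto
    hence "tup k \<inter> \<Inter>(G1 \<union> G2) \<noteq> {}" using Mf(1) unfolding fip_def by blast
    thus False using G1(3) G2(3) by blast
  qed
  have "is_type Def k M" unfolding is_type_def
    apply (intro conjI)
      apply (rule Mf(2))
     apply (rule tupM)
    apply (rule empM)
    using intM apply blast
    using upM apply blast
    using cM apply blast
    done
  thus ?thesis using Mf by blast
qed


lemma type_fin: assumes r: "is_type Def k r" shows "finite H \<Longrightarrow> H \<subseteq> r \<Longrightarrow> tup k \<inter> \<Inter>H \<in> r"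
proof (induction H rule: finite_induct)
  case empty then show ?case using ty_tup[OF r] by simp
next
  case (insert h H)
  have "h \<in> r" "tup k \<inter> \<Inter>H \<in> r" using insert by auto
  hence "h \<inter> (tup k \<inter> \<Inter>H) \<in> r" by (rule ty_int[OF r])
  moreover have "h \<inter> (tup k \<inter> \<Inter>H) = tup k \<inter> \<Inter>(insert h H)" by auto
  ultimately show ?case by simp
qed

end

locale fstruc = struc Def for Def :: "nat \<Rightarrow> 'a list set set" +
  fixes n m :: nat and X Y :: "'a list set" and f :: "'a list \<Rightarrow> 'a list"
  assumes fd: "definable_fun Def n m X Y f"
begin

lemma XD: "X \<in> Def n" and YD: "Y \<in> Def m" and fXY: "f ` X \<subseteq> Y" and GrD: "{xs @ f xs | xs. xs \<in> X} \<in> Def (n + m)"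
  using fd unfolding definable_fun_def by blast+

lemma Xt: "X \<subseteq> tup n" using sub[OF XD] .
lemma Yt: "Y \<subseteq> tup m" using sub[OF YD] .
lemma ft: "x \<in> X \<Longrightarrow> f x \<in> tup m" using fXY Yt by blast
lemma lenX: "x \<in> X \<Longrightarrow> length x = n" using Xt by (auto simp: tup_def)

lemma preD: assumes D: "D \<in> Def m" shows "{xs \<in> X. f xs \<in> D} \<in> Def n"
proof -
  let ?H = "{xs @ f xs | xs. xs \<in> X} \<inter> {ys @ xs | xs ys. xs \<in> D \<and> ys \<in> tup n}"
  have "?H \<in> Def (n + m)" using int[OF GrD pfxn[OF D]] .
  hence "take n ` ?H \<in> Def n" by (rule taken)
  moreover have "take n ` ?H = {xs \<in> X. f xs \<in> D}"
  proof
    show "take n ` ?H \<subseteq> {xs \<in> X. f xs \<in> D}"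
    proof
      fix z assume "z \<in> take n ` ?H"
      then obtain w where w: "w \<in> ?H" "z = take n w" by blast
      have w1: "w \<in> {xs @ f xs | xs. xs \<in> X}" and w2: "w \<in> {ys @ xs | xs ys. xs \<in> D \<and> ys \<in> tup n}" using w(1) by blast+
      obtain xs where h1: "w = xs @ f xs" "xs \<in> X" using w1 by blast
      obtain ys d where h2: "w = ys @ d" "d \<in> D" "ys \<in> tup n" using w2 by blast
      note h = h1 h2
      have "length xs = length ys" using lenX[OF h(2)] h(5) by (simp add: tup_def)
      hence "xs = ys \<and> f xs = d" using h(1,3) by (simp add: append_eq_append_conv)
      moreover have "z = xs" using w(2) h(1) lenX[OF h(2)] by simp
      ultimately show "z \<in> {xs \<in> X. f xs \<in> D}" using h by simp
    qed
    show "{xs \<in> X. f xs \<in> D} \<subseteq> take n ` ?H"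
    proof
      fix x assume x: "x \<in> {xs \<in> X. f xs \<in> D}"
      hence "x \<in> tup n" using Xt by blast
      hence "x @ f x \<in> {ys @ xs | xs ys. xs \<in> D \<and> ys \<in> tup n}" using x by (intro CollectI exI[of _ "f x"] exI[of _ x]) simp
      moreover have "x @ f x \<in> {xs @ f xs | xs. xs \<in> X}" using x by (intro CollectI exI[of _ x]) simp
      ultimately have A1: "x @ f x \<in> ?H" by (rule IntI[rotated])
      have A2: "take n (x @ f x) = x" using lenX x by simp
      show "x \<in> take n ` ?H" using image_eqI[of x "take n" "x @ f x", OF sym[OF A2] A1] .
    qed
  qed
  ultimately show ?thesis by simp
qed

lemma imgD: assumes Z: "Z \<in> Def n" "Z \<subseteq> X" shows "f ` Z \<in> Def m"
proof -
  let ?H = "{xs @ f xs | xs. xs \<in> X} \<inter> {xs @ ys | xs ys. xs \<in> Z \<and> ys \<in> tup m}"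
  have "?H \<in> Def (n + m)" using int[OF GrD sfxn[OF Z(1)]] .
  hence "drop n ` ?H \<in> Def m" by (rule dropn)
  moreover have "drop n ` ?H = f ` Z"
  proof
    show "drop n ` ?H \<subseteq> f ` Z"
    proof
      fix z assume "z \<in> drop n ` ?H"
      then obtain w where w: "w \<in> ?H" "z = drop n w" by blast
      have w1: "w \<in> {xs @ f xs | xs. xs \<in> X}" and w2: "w \<in> {xs @ ys | xs ys. xs \<in> Z \<and> ys \<in> tup m}" using w(1) by blast+
      obtain xs where h1: "w = xs @ f xs" "xs \<in> X" using w1 by blast
      obtain zs ys where h2: "w = zs @ ys" "zs \<in> Z" "ys \<in> tup m" using w2 by blast
      note h = h1 h2
      have "length xs = length zs" using lenX[OF h(2)] lenX h(4) Z(2) by auto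
      hence "xs = zs" using h(1,3) by (simp add: append_eq_append_conv)
      moreover have "z = f xs" using w(2) h(1) lenX[OF h(2)] by simp
      ultimately show "z \<in> f ` Z" using h by simp
    qed
    show "f ` Z \<subseteq> drop n ` ?H"
    proof
      fix y assume "y \<in> f ` Z"
      then obtain x where x: "x \<in> Z" "y = f x" by blast
      have "x \<in> X" using x Z by blast
      hence "f x \<in> tup m" by (rule ft)
      hence "x @ f x \<in> {xs @ ys | xs ys. xs \<in> Z \<and> ys \<in> tup m}" using x by (intro CollectI exI[of _ x] exI[of _ "f x"]) simp
      moreover have "x @ f x \<in> {xs @ f xs | xs. xs \<in> X}" using \<open>x \<in> X\<close> by (intro CollectI exI[of _ x]) simp
      ultimately have A1: "x @ f x \<in> ?H" by (rule IntI[rotated])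
      have A2: "drop n (x @ f x) = y" using lenX[OF \<open>x \<in> X\<close>] x by simp
      show "y \<in> drop n ` ?H" using image_eqI[of y "drop n" "x @ f x", OF sym[OF A2] A1] .
    qed
  qed
  ultimately show ?thesis by simp
qed

lemma pre_tup: "{xs \<in> X. f xs \<in> tup m} = X" using ft by blast

lemma push_tup: "X \<in> p \<Longrightarrow> tup m \<in> pushforward Def m X f p"
  unfolding pushforward_def using pre_tup tupD by simp

lemma push_int: assumes p: "is_type Def n p" and A: "A \<in> pushforward Def m X f p" and B: "B \<in> pushforward Def m X f p"
  shows "A \<inter> B \<in> pushforward Def m X f p"
proof -
  have a: "A \<in> Def m" "B \<in> Def m" "{xs \<in> X. f xs \<in> A} \<in> p" "{xs \<in> X. f xs \<in> B} \<in> p"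
    using A B unfolding pushforward_def by blast+
  have e: "{xs \<in> X. f xs \<in> A} \<inter> {xs \<in> X. f xs \<in> B} = {xs \<in> X. f xs \<in> A \<inter> B}" by blast
  have "{xs \<in> X. f xs \<in> A \<inter> B} \<in> p" using ty_int[OF p a(3) a(4)] unfolding e .
  moreover have "A \<inter> B \<in> Def m" using int[OF a(1) a(2)] .
  ultimately show ?thesis unfolding pushforward_def by simp
qed

lemma push_emp: assumes p: "is_type Def n p" shows "{} \<notin> pushforward Def m X f p"
proof -
  have "{xs \<in> X. f xs \<in> {}} = {}" by simp
  thus ?thesis unfolding pushforward_def using ty_emp[OF p] by simp
qed

lemma avoid: assumes p: "is_type Def n p" "X \<in> p" and nr: "\<not> realized (pushforward Def m X f p)"
  and S: "finite S" shows "\<exists>D \<in> pushforward Def m X f p. D \<inter> S = {}"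
  using S
proof (induction S rule: finite_induct)
  case empty then show ?case using push_tup[OF p(2)] by blast
next
  case (insert b S)
  then obtain D where D: "D \<in> pushforward Def m X f p" "D \<inter> S = {}" by blast
  obtain Db where Db: "Db \<in> pushforward Def m X f p" "b \<notin> Db" using nr unfolding realized_def by blast
  have "D \<inter> Db \<in> pushforward Def m X f p" using push_int[OF p(1) D(1) Db(1)] .
  moreover have "D \<inter> Db \<inter> insert b S = {}" using D(2) Db(2) by blast
  ultimately show ?case by blast
qed

lemma dir1:
  assumes aas: "always_almost_saturated Def n X f"
    and p: "p \<in> types_on Def n X" and q: "q \<in> types_on Def n X"
    and eq: "pushforward Def m X f p = pushforward Def m X f q"
    and nr: "\<not> realized (pushforward Def m X f p)"
    and Zp: "Z \<in> p" and Zq: "Z \<notin> q"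
  shows False
proof -
  have pt: "is_type Def n p" "X \<in> p" and qt: "is_type Def n q" "X \<in> q" using p q unfolding types_on_def by auto
  have ZD: "Z \<in> Def n" using ty_sub[OF pt(1)] Zp by blast
  have cZ: "tup n - Z \<in> q" by (rule ty_cmp[OF qt(1) ZD Zq])
  define Z' where "Z' = Z \<inter> X"
  have Z'D: "Z' \<in> Def n" unfolding Z'_def using int[OF ZD XD] .
  have Z'p: "Z' \<in> p" unfolding Z'_def by (rule ty_int[OF pt(1) Zp pt(2)])
  have Z'X: "Z' \<subseteq> X" unfolding Z'_def by blast
  have XZ'q: "X - Z' \<in> q"
  proof -
    have "X \<inter> (tup n - Z) \<in> q" by (rule ty_int[OF qt(1) qt(2) cZ])
    moreover have "X \<inter> (tup n - Z) = X - Z'" unfolding Z'_def using Xt by blast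
    ultimately show ?thesis by simp
  qed
  define S where "S = f ` Z' \<inter> f ` (X - Z')"
  have finS: "finite S" using aas Z'D Z'X unfolding S_def always_almost_saturated_def almost_saturated_def by blast
  obtain D0 where D0: "D0 \<in> pushforward Def m X f p" "D0 \<inter> S = {}" using avoid[OF pt nr finS] by blast
  have D0D: "D0 \<in> Def m" and D0p: "{xs \<in> X. f xs \<in> D0} \<in> p" using D0(1) unfolding pushforward_def by blast+
  define E where "E = f ` Z' \<inter> D0"
  have ED: "E \<in> Def m" unfolding E_def using int[OF imgD[OF Z'D Z'X] D0D] .
  have preED: "{xs \<in> X. f xs \<in> E} \<in> Def n" using preD[OF ED] .
  have "Z' \<inter> {xs \<in> X. f xs \<in> D0} \<in> p" by (rule ty_int[OF pt(1) Z'p D0p])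
  moreover have "Z' \<inter> {xs \<in> X. f xs \<in> D0} \<subseteq> {xs \<in> X. f xs \<in> E}" unfolding E_def using Z'X by blast
  ultimately have "{xs \<in> X. f xs \<in> E} \<in> p" using ty_up[OF pt(1) _ preED] by blast
  hence "E \<in> pushforward Def m X f p" unfolding pushforward_def using ED by blast
  hence "E \<in> pushforward Def m X f q" using eq by simp
  hence "{xs \<in> X. f xs \<in> E} \<in> q" unfolding pushforward_def by blast
  hence "{xs \<in> X. f xs \<in> E} \<inter> (X - Z') \<in> q" using ty_int[OF qt(1) _ XZ'q] by blast
  moreover have "{xs \<in> X. f xs \<in> E} \<inter> (X - Z') = {}"
    unfolding E_def using D0(2) unfolding S_def by blast
  ultimately show False using ty_emp[OF qt(1)] by simp
qed

lemma maxeq: assumes r: "is_type Def m r" and p: "is_type Def n p" and sub: "r \<subseteq> pushforward Def m X f p"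
  shows "pushforward Def m X f p = r"
proof
  show "pushforward Def m X f p \<subseteq> r"
  proof
    fix A assume A: "A \<in> pushforward Def m X f p"
    show "A \<in> r"
    proof (rule ccontr)
      assume "A \<notin> r"
      moreover have "A \<in> Def m" using A unfolding pushforward_def by blast
      ultimately have "tup m - A \<in> r" using ty_cmp[OF r] by blast
      hence "tup m - A \<in> pushforward Def m X f p" using sub by blast
      hence "A \<inter> (tup m - A) \<in> pushforward Def m X f p" using push_int[OF p A] by blast
      thus False using push_emp[OF p] by simp
    qed
  qed
qed (rule sub)

lemma lift: assumes r: "is_type Def m r" and V: "V \<in> Def n" "V \<subseteq> X" and W: "W \<in> r" "W \<subseteq> f ` V"
  shows "\<exists>p. p \<in> types_on Def n X \<and> V \<in> p \<and> pushforward Def m X f p = r"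
proof -
  define pre where "pre = (\<lambda>D. {xs \<in> X. f xs \<in> D})"
  let ?B = "insert V (pre ` r)"
  have rD: "r \<subseteq> Def m" by (rule ty_sub[OF r])
  have "pre ` r \<subseteq> Def n"
  proof
    fix A assume "A \<in> pre ` r"
    then obtain D where "D \<in> r" "A = pre D" by blast
    thus "A \<in> Def n" using preD[of D] rD unfolding pre_def by blast
  qed
  hence BD: "?B \<subseteq> Def n" using V(1) by simp
  have fB: "fip n ?B" unfolding fip_def
  proof (intro allI impI)
    fix G assume G: "G \<subseteq> ?B" "finite G"
    have "G - {V} \<subseteq> pre ` r" "finite (G - {V})" using G by auto
    then obtain H where H: "H \<subseteq> r" "finite H" "G - {V} = pre ` H"
      using finite_subset_image[of "G - {V}" pre r] by blast
    have "finite (insert W H)" "insert W H \<subseteq> r" using H W by auto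
    hence "tup m \<inter> \<Inter>(insert W H) \<in> r" by (rule type_fin[OF r])
    hence "tup m \<inter> \<Inter>(insert W H) \<noteq> {}" using ty_emp[OF r] by auto
    then obtain y where y: "y \<in> W" "\<forall>D\<in>H. y \<in> D" by blast
    then obtain x where x: "x \<in> V" "y = f x" using W(2) by blast
    have xX: "x \<in> X" using x V by blast
    have "x \<in> tup n" using xX Xt by blast
    moreover have "\<forall>A\<in>G. x \<in> A"
    proof
      fix A assume "A \<in> G"
      show "x \<in> A"
      proof (cases "A = V")
        case True thus ?thesis using x by simp
      next
        case False
        hence "A \<in> pre ` H" using \<open>A \<in> G\<close> H(3) by blast
        then obtain D where D: "D \<in> H" "A = pre D" by blast
        have "f x \<in> D" using y(2) D(1) x(2) by blast
        thus ?thesis using D(2) xX unfolding pre_def by simp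
      qed
    qed
    ultimately show "tup n \<inter> \<Inter>G \<noteq> {}" by blast
  qed
  obtain p where p: "is_type Def n p" "?B \<subseteq> p" using extend[OF BD fB] by blast
  have "tup m \<in> r" by (rule ty_tup[OF r])
  hence "pre (tup m) \<in> ?B" by blast
  hence "X \<in> p" using p(2) pre_tup unfolding pre_def by auto
  moreover have "r \<subseteq> pushforward Def m X f p"
  proof
    fix D assume "D \<in> r"
    hence "D \<in> Def m" "pre D \<in> p" using rD p(2) by auto
    thus "D \<in> pushforward Def m X f p" unfolding pushforward_def pre_def by simp
  qed
  ultimately have "p \<in> types_on Def n X" "V \<in> p" "pushforward Def m X f p = r"
    using maxeq[OF r p(1)] p unfolding types_on_def by auto
  thus ?thesis by blast
qed

lemma dir2:
  assumes R: "\<forall>p q. p \<in> types_on Def n X \<longrightarrow> q \<in> types_on Def n X \<longrightarrow>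
            pushforward Def m X f p = pushforward Def m X f q \<longrightarrow>
            \<not> realized (pushforward Def m X f p) \<longrightarrow> p = q"
    and Z: "Z \<in> Def n" "Z \<subseteq> X"
  shows "almost_saturated X f Z"
proof (rule ccontr)
  assume "\<not> almost_saturated X f Z"
  hence inf: "infinite (f ` Z \<inter> f ` (X - Z))" unfolding almost_saturated_def by blast
  let ?W = "f ` Z \<inter> f ` (X - Z)"
  have XZ: "X - Z \<in> Def n"
  proof -
    have "X \<inter> (tup n - Z) = X - Z" using Xt by blast
    thus ?thesis using int[OF XD compl[OF Z(1)]] by simp
  qed
  have WD: "?W \<in> Def m" using int[OF imgD[OF Z] imgD[OF XZ]] by blast
  have Wt: "?W \<subseteq> tup m" using sub[OF WD] .
  let ?B = "insert ?W ((\<lambda>c. tup m - {c}) ` tup m)"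
  have "(\<lambda>c::'a list. tup m - {c}) ` tup m \<subseteq> Def m"
  proof
    fix A assume "A \<in> (\<lambda>c::'a list. tup m - {c}) ` tup m"
    then obtain c where "c \<in> tup m" "A = tup m - {c}" by blast
    thus "A \<in> Def m" using compl[OF singD] by simp
  qed
  hence BD: "?B \<subseteq> Def m" using WD by simp
  have fB: "fip m ?B" unfolding fip_def
  proof (intro allI impI)
    fix G assume G: "G \<subseteq> ?B" "finite G"
    let ?K = "\<Union>((\<lambda>D. tup m - D) ` (G - {?W}))"
    have "\<forall>D \<in> G - {?W}. finite (tup m - D)"
    proof
      fix D assume "D \<in> G - {?W}"
      hence "D \<in> (\<lambda>c. tup m - {c}) ` tup m" using G(1) by blast
      then obtain c where "c \<in> tup m" "D = tup m - {c}" by blast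
      hence "tup m - D = {c}" by blast
      thus "finite (tup m - D)" by simp
    qed
    hence "finite ?K" using G(2) by (intro finite_UN_I) auto
    hence "infinite (?W - ?K)" using inf by (rule Diff_infinite_finite)
    hence "?W - ?K \<noteq> {}" by (metis finite.emptyI)
    then obtain w where w: "w \<in> ?W" "w \<notin> ?K" by blast
    have "w \<in> tup m" using w Wt by blast
    moreover have "\<forall>D\<in>G. w \<in> D"
    proof
      fix D assume "D \<in> G"
      show "w \<in> D"
      proof (cases "D = ?W")
        case True thus ?thesis using w by simp
      next
        case False
        hence "D \<in> G - {?W}" using \<open>D \<in> G\<close> by simp
        hence "w \<notin> tup m - D" using w(2) by blast
        thus ?thesis using \<open>w \<in> tup m\<close> by simp
      qed
    qed
    ultimately show "tup m \<inter> \<Inter>G \<noteq> {}" by blast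
  qed
  obtain r where r: "is_type Def m r" "?B \<subseteq> r" using extend[OF BD fB] by blast
  have nr: "\<not> realized r" unfolding realized_def
  proof
    assume "\<exists>b. \<forall>D\<in>r. b \<in> D"
    then obtain b where b: "\<forall>D\<in>r. b \<in> D" by blast
    show False
    proof (cases "b \<in> tup m")
      case True
      hence "tup m - {b} \<in> r" using r(2) by blast
      thus False using b by blast
    next
      case False
      have "tup m \<in> r" by (rule ty_tup[OF r(1)])
      thus False using b False by blast
    qed
  qed
  have Wr: "?W \<in> r" using r(2) by blast
  obtain p where p: "p \<in> types_on Def n X" "Z \<in> p" "pushforward Def m X f p = r"
    using lift[OF r(1) Z Wr] by blast
  obtain q where q: "q \<in> types_on Def n X" "X - Z \<in> q" "pushforward Def m X f q = r"
    using lift[OF r(1) XZ _ Wr] by blast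
  have "p = q" using R[rule_format, OF p(1) q(1)] p(3) q(3) nr by simp
  have qt: "is_type Def n q" using q(1) unfolding types_on_def by blast
  have "Z \<inter> (X - Z) \<in> q" using ty_int[OF qt _ q(2)] p(2) \<open>p = q\<close> by blast
  thus False using ty_emp[OF qt] by simp
qed

end

theorem lemma2p22:
  fixes Def :: "nat \<Rightarrow> 'a list set set"
    and X Y :: "'a list set" and f :: "'a list \<Rightarrow> 'a list" and n m :: nat
  assumes "is_structure Def"
    and "saturated Def"
    and "definable_fun Def n m X Y f"
  shows "always_almost_saturated Def n X f \<longleftrightarrow>
         (\<forall>p q. p \<in> types_on Def n X \<longrightarrow> q \<in> types_on Def n X \<longrightarrow>
            pushforward Def m X f p = pushforward Def m X f q \<longrightarrow>
            \<not> realized (pushforward Def m X f p) \<longrightarrow> p = q)"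
proof -
  interpret F: fstruc Def n m X Y f
    by unfold_locales (rule assms(1), rule assms(3))
  show ?thesis
  proof
    assume aas: "always_almost_saturated Def n X f"
    show "\<forall>p q. p \<in> types_on Def n X \<longrightarrow> q \<in> types_on Def n X \<longrightarrow>
            pushforward Def m X f p = pushforward Def m X f q \<longrightarrow>
            \<not> realized (pushforward Def m X f p) \<longrightarrow> p = q"
    proof (intro allI impI)
      fix p q
      assume p: "p \<in> types_on Def n X" and q: "q \<in> types_on Def n X"
        and eq: "pushforward Def m X f p = pushforward Def m X f q"
        and nr: "\<not> realized (pushforward Def m X f p)"
      have nr': "\<not> realized (pushforward Def m X f q)" using nr eq by simp
      show "p = q"
      proof (rule ccontr)
        assume "p \<noteq> q"
        then obtain Z where "(Z \<in> p \<and> Z \<notin> q) \<or> (Z \<in> q \<and> Z \<notin> p)" by blast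
        thus False
        proof
          assume "Z \<in> p \<and> Z \<notin> q"
          thus False using F.dir1[OF aas p q eq nr] by blast
        next
          assume "Z \<in> q \<and> Z \<notin> p"
          thus False using F.dir1[OF aas q p eq[symmetric] nr'] by blast
        qed
      qed
    qed
  next
    assume R: "\<forall>p q. p \<in> types_on Def n X \<longrightarrow> q \<in> types_on Def n X \<longrightarrow>
            pushforward Def m X f p = pushforward Def m X f q \<longrightarrow>
            \<not> realized (pushforward Def m X f p) \<longrightarrow> p = q"
    show "always_almost_saturated Def n X f"
      unfolding always_almost_saturated_def using F.dir2[OF R] by blast
  qed
qed

end
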